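(* $|\mathrm{GHZ}\rangle^{\otimes 17}\stackrel{\textrm{SLOCC}}{\longrightarrow}|\Phi^3\rangle^{\otimes 6}$.
   Context: Three parties $A,B,C$. $|\mathrm{GHZ}\rangle=\frac{1}{\sqrt2}(|000\rangle+|111\rangle)$ with one qubit held by each of $A,B,C$. Let $|\Phi\rangle=|00\rangle+|11\rangle$ (unnormalized EPR state). $|\Phi^3\rangle=|\Phi\rangle_{AB}|\Phi\rangle_{AC}|\Phi\rangle_{BC}$ is the (unnormalized) state in which each pair of parties shares one EPR state, so each party holds two qubits. Tensor powers are taken with each party holding its own parts of all copies. $|\psi\rangle\stackrel{\textrm{SLOCC}}{\longrightarrow}|\phi\rangle$ means $|\psi\rangle$ can be transformed into $|\phi\rangle$ with nonzero probability by local operations and classical communication; equivalently, there exist linear operators $A,B,C$ on the respective parties' spaces with $(A\otimes B\otimes C)|\psi\rangle=|\phi\rangle$ up to a nonzero scalar. *)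

theory Defs
  imports Complex_Main
begin

text \<open>A tripartite tensor: local dimensions (dA, dB, dC) together with its coefficient
  function; coefficient (i,j,k) is the amplitude of basis vector |i>_A |j>_B |k>_C,
  for i < dA, j < dB, k < dC (values outside that range are irrelevant).\<close>
type_synonym tens3 = "(nat \<times> nat \<times> nat) \<times> (nat \<Rightarrow> nat \<Rightarrow> nat \<Rightarrow> complex)"

definition dimA :: "tens3 \<Rightarrow> nat" where "dimA T = fst (fst T)"
definition dimB :: "tens3 \<Rightarrow> nat" where "dimB T = fst (snd (fst T))"
definition dimC :: "tens3 \<Rightarrow> nat" where "dimC T = snd (snd (fst T))"
definition coef :: "tens3 \<Rightarrow> nat \<Rightarrow> nat \<Rightarrow> nat \<Rightarrow> complex" where "coef T = snd T"

definition tprod :: "tens3 \<Rightarrow> tens3 \<Rightarrow> tens3" where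
  "tprod T S =
     ((dimA T * dimA S, dimB T * dimB S, dimC T * dimC S),
      (\<lambda>i j k. coef T (i div dimA S) (j div dimB S) (k div dimC S)
              * coef S (i mod dimA S) (j mod dimB S) (k mod dimC S)))"

fun tpow :: "tens3 \<Rightarrow> nat \<Rightarrow> tens3" where
  "tpow T 0 = ((1, 1, 1), (\<lambda>i j k. 1))"
| "tpow T (Suc n) = tprod T (tpow T n)"

definition GHZ :: tens3 where
  "GHZ = ((2, 2, 2), (\<lambda>i j k. if i = j \<and> j = k \<and> k < 2 then complex_of_real (1 / sqrt 2) else 0))"

text \<open>Unnormalized Phi_AB Phi_AC Phi_BC. A holds (a1,a2) with index 2*a1+a2,
  a1 from the AB pair and a2 from the AC pair; B holds (b1,b2), b1 from AB, b2 from BC;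
  C holds (c1,c2), c1 from AC, c2 from BC.\<close>
definition Phi3 :: tens3 where
  "Phi3 = ((4, 4, 4), (\<lambda>i j k.
      if i < 4 \<and> j < 4 \<and> k < 4 \<and> i div 2 = j div 2 \<and> i mod 2 = k div 2 \<and> j mod 2 = k mod 2
      then 1 else 0))"

definition slocc :: "tens3 \<Rightarrow> tens3 \<Rightarrow> bool" where
  "slocc T S \<longleftrightarrow>
     (\<exists>(A :: nat \<Rightarrow> nat \<Rightarrow> complex) (B :: nat \<Rightarrow> nat \<Rightarrow> complex) (C :: nat \<Rightarrow> nat \<Rightarrow> complex) (c :: complex).
        c \<noteq> 0 \<and>
        (\<forall>i < dimA S. \<forall>j < dimB S. \<forall>k < dimC S.
           (\<Sum>i' < dimA T. \<Sum>j' < dimB T. \<Sum>k' < dimC T.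
               A i i' * B j j' * C k k' * coef T i' j' k') = c * coef S i j k))"

end

theory Submission
  imports Defs
begin

definition decomp :: "nat \<Rightarrow> tens3 \<Rightarrow> bool" where
  "decomp n S \<longleftrightarrow> (\<exists>a b c :: nat \<Rightarrow> nat \<Rightarrow> complex.
     \<forall>i < dimA S. \<forall>j < dimB S. \<forall>k < dimC S.
       (\<Sum>r<n. a r i * b r j * c r k) = coef S i j k)"

definition sa :: "int list list" where
  "sa = [[1, 0, 0, 1], [0, 1, 0, 1], [1, 0, 0, 0], [0, 0, 0, 1], [1, 0, 1, 0], [-1, 1, 0, 0], [0, 0, 1, -1]]"
definition sb :: "int list list" where
  "sb = [[1, 0, 0, 1], [1, 0, 0, 0], [0, 1, 0, -1], [-1, 0, 1, 0], [0, 0, 0, 1], [1, 1, 0, 0], [0, 0, 1, 1]]"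
definition sc :: "int list list" where
  "sc = [[1, 0, 0, 1], [0, 0, 1, -1], [0, 1, 0, 1], [1, 0, 1, 0], [-1, 1, 0, 0], [0, 0, 0, 1], [1, 0, 0, 0]]"

lemma less4: "(i::nat) < 4 \<longleftrightarrow> i = 0 \<or> i = 1 \<or> i = 2 \<or> i = 3" by auto

lemma sum7: "(\<Sum>r<(7::nat). f r) = f 0 + f 1 + f 2 + f 3 + f 4 + f 5 + (f 6 :: complex)"
  by (simp add: numeral_eq_Suc)

lemma strassen_int: "\<forall>i<4. \<forall>j<4. \<forall>k<4.
   (\<Sum>r<7. of_int (sa!r!i) * of_int (sb!r!j) * of_int (sc!r!k) :: complex) =
   (if i div 2 = j div 2 \<and> i mod 2 = k div 2 \<and> j mod 2 = k mod 2 then 1 else 0)"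
  unfolding less4 sum7 by (auto simp: sa_def sb_def sc_def)

lemma decomp_Phi3: "decomp 7 Phi3"
  unfolding decomp_def
  apply (rule exI[of _ "\<lambda>r i. of_int (sa!r!i)"])
  apply (rule exI[of _ "\<lambda>r i. of_int (sb!r!i)"])
  apply (rule exI[of _ "\<lambda>r i. of_int (sc!r!i)"])
  using strassen_int by (simp add: Phi3_def dimA_def dimB_def dimC_def coef_def)

lemma sum_split: fixes n m :: nat shows "(\<Sum>r<n*m. f r) = (\<Sum>x<n. \<Sum>y<m. f (x*m+y)) "
proof (induction n)
  case 0 then show ?case by simp
next
  case (Suc n)
  have "{..<Suc n * m} = {..<n*m} \<union> {n*m..<n*m+m}" by auto
  then have "(\<Sum>r<Suc n*m. f r) = (\<Sum>r<n*m. f r) + (\<Sum>r\<in>{n*m..<n*m+m}. f r)"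
    by (simp add: sum.union_disjoint ivl_disj_int)
  also have "(\<Sum>r\<in>{n*m..<n*m+m}. f r) = (\<Sum>y\<in>{0..<m}. f (y + n*m))"
    using sum.shift_bounds_nat_ivl[of f 0 "n*m" m] by (simp add: add.commute)
  also have "\<dots> = (\<Sum>y<m. f (n*m+y))" by (simp add: lessThan_atLeast0 add.commute)
  finally show ?case using Suc by simp
qed

lemma decomp_mono: "decomp n S \<Longrightarrow> n \<le> m \<Longrightarrow> decomp m S"
  unfolding decomp_def
proof (elim exE)
  fix a b c assume h: "\<forall>i<dimA S. \<forall>j<dimB S. \<forall>k<dimC S. (\<Sum>r<n. a r i * b r j * c r k) = coef S i j k"
    and nm: "n \<le> m"
  let ?a = "\<lambda>r i. if r < n then a r i else 0"
  have "\<forall>i<dimA S. \<forall>j<dimB S. \<forall>k<dimC S. (\<Sum>r<m. ?a r i * b r j * c r k) = coef S i j k"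
  proof (intro allI impI)
    fix i j k assume "i < dimA S" "j < dimB S" "k < dimC S"
    have "(\<Sum>r<m. ?a r i * b r j * c r k) = (\<Sum>r<n. ?a r i * b r j * c r k)"
      using nm by (intro sum.mono_neutral_right) auto
    also have "\<dots> = (\<Sum>r<n. a r i * b r j * c r k)" by simp
    finally show "(\<Sum>r<m. ?a r i * b r j * c r k) = coef S i j k" using h \<open>i < dimA S\<close> \<open>j < dimB S\<close> \<open>k < dimC S\<close> by simp
  qed
  note hh = this
  show "\<exists>a b c. \<forall>i<dimA S. \<forall>j<dimB S. \<forall>k<dimC S. (\<Sum>r<m. a r i * b r j * c r k) = coef S i j k"
    apply (rule exI[of _ ?a], rule exI[of _ b], rule exI[of _ c]) using hh by simp
qed

lemma decomp_tprod: "decomp n S \<Longrightarrow> decomp m T \<Longrightarrow> decomp (n*m) (tprod S T)"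
proof -
  assume "decomp n S" "decomp m T"
  then obtain a b c a2 b2 c2 where
    h1: "\<forall>i<dimA S. \<forall>j<dimB S. \<forall>k<dimC S. (\<Sum>r<n. a r i * b r j * c r k) = coef S i j k" and
    h2: "\<forall>i<dimA T. \<forall>j<dimB T. \<forall>k<dimC T. (\<Sum>r<m. a2 r i * b2 r j * c2 r k) = coef T i j k"
    unfolding decomp_def by blast
  let ?a = "\<lambda>r i. a (r div m) (i div dimA T) * a2 (r mod m) (i mod dimA T)"
  let ?b = "\<lambda>r i. b (r div m) (i div dimB T) * b2 (r mod m) (i mod dimB T)"
  let ?c = "\<lambda>r i. c (r div m) (i div dimC T) * c2 (r mod m) (i mod dimC T)"
  have "\<forall>i<dimA (tprod S T). \<forall>j<dimB (tprod S T). \<forall>k<dimC (tprod S T).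
         (\<Sum>r<n*m. ?a r i * ?b r j * ?c r k) = coef (tprod S T) i j k"
  proof (intro allI impI)
    fix i j k assume hi: "i < dimA (tprod S T)" and hj: "j < dimB (tprod S T)" and hk: "k < dimC (tprod S T)"
    have di: "i < dimA S * dimA T" and dj: "j < dimB S * dimB T" and dk: "k < dimC S * dimC T"
      using hi hj hk by (auto simp: tprod_def dimA_def dimB_def dimC_def)
    have pA: "dimA T > 0" and pB: "dimB T > 0" and pC: "dimC T > 0" using di dj dk by (metis mult_0_right not_less_zero neq0_conv)+
    have i1: "i div dimA T < dimA S" using di by (simp add: less_mult_imp_div_less)
    have j1: "j div dimB T < dimB S" using dj by (simp add: less_mult_imp_div_less)
    have k1: "k div dimC T < dimC S" using dk by (simp add: less_mult_imp_div_less)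
    have i2: "i mod dimA T < dimA T" using pA by simp
    have j2: "j mod dimB T < dimB T" using pB by simp
    have k2: "k mod dimC T < dimC T" using pC by simp
    have "(\<Sum>r<n*m. ?a r i * ?b r j * ?c r k) = (\<Sum>x<n. \<Sum>y<m. ?a (x*m+y) i * ?b (x*m+y) j * ?c (x*m+y) k)"
      by (rule sum_split)
    also have "\<dots> = (\<Sum>x<n. \<Sum>y<m. (a x (i div dimA T) * b x (j div dimB T) * c x (k div dimC T)) *
                     (a2 y (i mod dimA T) * b2 y (j mod dimB T) * c2 y (k mod dimC T)))"
      by (intro sum.cong refl) (simp add: algebra_simps)
    also have "\<dots> = (\<Sum>x<n. a x (i div dimA T) * b x (j div dimB T) * c x (k div dimC T)) *
                    (\<Sum>y<m. a2 y (i mod dimA T) * b2 y (j mod dimB T) * c2 y (k mod dimC T))"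
      by (simp add: sum_product)
    also have "\<dots> = coef S (i div dimA T) (j div dimB T) (k div dimC T) * coef T (i mod dimA T) (j mod dimB T) (k mod dimC T)"
      using h1 h2 i1 j1 k1 i2 j2 k2 by simp
    also have "\<dots> = coef (tprod S T) i j k" by (simp add: tprod_def coef_def)
    finally show "(\<Sum>r<n*m. ?a r i * ?b r j * ?c r k) = coef (tprod S T) i j k" .
  qed
  note hh = this
  show ?thesis unfolding decomp_def
    apply (rule exI[of _ ?a], rule exI[of _ ?b], rule exI[of _ ?c]) using hh by simp
qed

lemma decomp_tpow: "decomp (7^n) (tpow Phi3 n)"
proof (induction n)
  case 0
  show ?case unfolding decomp_def
    by (rule exI[of _ "\<lambda>r i. 1"], rule exI[of _ "\<lambda>r i. 1"], rule exI[of _ "\<lambda>r i. 1"])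
       (simp add: coef_def)
next
  case (Suc n)
  then show ?case using decomp_tprod[OF decomp_Phi3 Suc] by simp
qed

definition gs :: complex where "gs = complex_of_real (1 / sqrt 2)"

lemma eq_divmod: "(i::nat) = j \<longleftrightarrow> i div d = j div d \<and> i mod d = j mod d"
  by (metis div_mult_mod_eq)

lemma tpow_GHZ_dims: "dimA (tpow GHZ n) = 2^n \<and> dimB (tpow GHZ n) = 2^n \<and> dimC (tpow GHZ n) = 2^n"
  by (induction n) (simp_all add: tprod_def dimA_def dimB_def dimC_def GHZ_def)

lemma tpow_GHZ_coef: "i < 2^n \<Longrightarrow> j < 2^n \<Longrightarrow> k < 2^n \<Longrightarrow>
   coef (tpow GHZ n) i j k = (if i = j \<and> j = k then gs^n else 0)"
proof (induction n arbitrary: i j k)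
  case 0 then show ?case by (simp add: coef_def)
next
  case (Suc n)
  let ?d = "(2::nat)^n"
  have dd: "dimA (tpow GHZ n) = ?d" "dimB (tpow GHZ n) = ?d" "dimC (tpow GHZ n) = ?d"
    using tpow_GHZ_dims by auto
  have "coef (tpow GHZ (Suc n)) i j k = coef GHZ (i div ?d) (j div ?d) (k div ?d) * coef (tpow GHZ n) (i mod ?d) (j mod ?d) (k mod ?d)"
    by (simp add: tprod_def coef_def dd)
  also have "\<dots> = (if i div ?d = j div ?d \<and> j div ?d = k div ?d \<and> k div ?d < 2 then gs else 0) *
     (if i mod ?d = j mod ?d \<and> j mod ?d = k mod ?d then gs^n else 0)"
    using Suc.IH[of "i mod ?d" "j mod ?d" "k mod ?d"] by (simp add: GHZ_def coef_def gs_def)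
  also have "\<dots> = (if i = j \<and> j = k then gs^Suc n else 0)"
  proof -
    have "k div ?d < 2" using Suc.prems by (simp add: less_mult_imp_div_less)
    then show ?thesis using eq_divmod[of i j ?d] eq_divmod[of j k ?d] by auto
  qed
  finally show ?case .
qed

theorem theorem1:
  shows "slocc (tpow GHZ 17) (tpow Phi3 6)"
proof -
  let ?N = "(2::nat)^17"
  have "decomp ?N (tpow Phi3 6)" using decomp_tpow[of 6] by (rule decomp_mono) simp
  then obtain a b c where h: "\<forall>i<dimA (tpow Phi3 6). \<forall>j<dimB (tpow Phi3 6). \<forall>k<dimC (tpow Phi3 6).
       (\<Sum>r<?N. a r i * b r j * c r k) = coef (tpow Phi3 6) i j k"
    unfolding decomp_def by blast
  have gs0: "gs^17 \<noteq> 0" by (simp add: gs_def)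
  have dd: "dimA (tpow GHZ 17) = ?N" "dimB (tpow GHZ 17) = ?N" "dimC (tpow GHZ 17) = ?N"
    using tpow_GHZ_dims by auto
  have key: "(\<Sum>i'<?N. \<Sum>j'<?N. \<Sum>k'<?N. a i' i * b j' j * c k' k * coef (tpow GHZ 17) i' j' k')
      = gs^17 * (\<Sum>r<?N. a r i * b r j * c r k)" for i j k
  proof -
    have "(\<Sum>i'<?N. \<Sum>j'<?N. \<Sum>k'<?N. a i' i * b j' j * c k' k * coef (tpow GHZ 17) i' j' k')
        = (\<Sum>i'<?N. \<Sum>j'<?N. \<Sum>k'<?N. a i' i * b j' j * c k' k * (if i' = j' \<and> j' = k' then gs^17 else 0))"
      by (intro sum.cong refl) (simp add: tpow_GHZ_coef)
    also have "\<dots> = (\<Sum>i'<?N. \<Sum>j'<?N. if i' = j' then a i' i * b j' j * c j' k * gs^17 else 0)"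
      by (intro sum.cong refl) (simp add: if_distrib[of "\<lambda>t. _ * t"] sum.delta' cong: if_cong)
    also have "\<dots> = (\<Sum>i'<?N. a i' i * b i' j * c i' k * gs^17)"
      by (intro sum.cong refl) (simp add: sum.delta)
    also have "\<dots> = gs^17 * (\<Sum>r<?N. a r i * b r j * c r k)"
      by (simp add: sum_distrib_left mult.commute)
    finally show ?thesis .
  qed
  show ?thesis unfolding slocc_def
    apply (rule exI[of _ "\<lambda>i i'. a i' i"], rule exI[of _ "\<lambda>j j'. b j' j"], rule exI[of _ "\<lambda>k k'. c k' k"],
           rule exI[of _ "gs^17"])
    using gs0 h key by (simp add: dd)
qed

end
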